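(* Let $M$ be a $3$-connected matroid, let $\mathcal{T}$ be a tangle of $M$, and let $X,X'$ be long lines of the tangle matroid $M(\mathcal{T})$ such that $\rank_{\mathcal{T}}(X\cup X')=4$. Let $e\in X$ and $M'\in\{M\setminus e, M/e\}$ be such that $M'$ is $3$-connected, and let $\mathcal{T}'$ be the tangle of $M'$ inherited from $\mathcal{T}$. Then $X'$ is closed in the tangle matroid $M'(\mathcal{T}')$.
   Context: $\lambda_M(X) = \rank_M(X) + \rank_M(E(M)\setminus X) - \rank(M)$. A tangle of order $\theta$ of $M$ is a collection $\mathcal{T}$ of subsets of $E(M)$ such that: (i) $\lambda_M(X)<\theta$ for all $X\in\mathcal{T}$; (ii) for every $X\subseteq E(M)$ with $\lambda_M(X)<\theta$, either $X\in\mathcal{T}$ or $E(M)\setminus X\in\mathcal{T}$; (iii) if $X,Y,Z\in\mathcal{T}$ then $X\cup Y\cup Z\neq E(M)$; (iv) $E(M)\setminus\{e\}\notin\mathcal{T}$ for every $e\in E(M)$. The tangle matroid $M(\mathcal{T})$ has rank function $\rank_{\mathcal{T}}(X) = \min\{\lambda_M(Y): X\subseteq Y\in\mathcal{T}\}$ if some member of $\mathcal{T}$ contains $X$, and $\theta$ otherwise. A long line is a closed set of rank $2$ with at least $3$ elements. For a minor $N$ of $M$ with $S=E(M)\setminus E(N)$, the tangle of $N$ inherited from $\mathcal{T}$ is $\{X\setminus S: X\in\mathcal{T},\ \lambda_N(X\setminus S)<\theta-|S|\}$, a tangle of $N$ of order $\theta-|S|$. *)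

theory Defs
  imports Main
begin

type_synonym 'a matroid = "'a set \<times> ('a set \<Rightarrow> nat)"

definition ground :: "'a matroid \<Rightarrow> 'a set" where
  "ground M = fst M"

definition rk :: "'a matroid \<Rightarrow> 'a set \<Rightarrow> nat" where
  "rk M = snd M"

definition matroid :: "'a matroid \<Rightarrow> bool" where
  "matroid M \<longleftrightarrow> finite (ground M)
     \<and> (\<forall>X. X \<subseteq> ground M \<longrightarrow> rk M X \<le> card X)
     \<and> (\<forall>X Y. X \<subseteq> Y \<and> Y \<subseteq> ground M \<longrightarrow> rk M X \<le> rk M Y)
     \<and> (\<forall>X Y. X \<subseteq> ground M \<and> Y \<subseteq> ground M \<longrightarrow>
          rk M (X \<union> Y) + rk M (X \<inter> Y) \<le> rk M X + rk M Y)"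

definition deletion :: "'a matroid \<Rightarrow> 'a \<Rightarrow> 'a matroid" where
  "deletion M e = (ground M - {e}, rk M)"

definition contraction :: "'a matroid \<Rightarrow> 'a \<Rightarrow> 'a matroid" where
  "contraction M e = (ground M - {e}, \<lambda>X. rk M (X \<union> {e}) - rk M {e})"

definition conn :: "'a matroid \<Rightarrow> 'a set \<Rightarrow> nat" where
  "conn M X = rk M X + rk M (ground M - X) - rk M (ground M)"

definition k_separation :: "'a matroid \<Rightarrow> nat \<Rightarrow> 'a set \<Rightarrow> bool" where
  "k_separation M k X \<longleftrightarrow> X \<subseteq> ground M \<and> card X \<ge> k \<and> card (ground M - X) \<ge> k
     \<and> conn M X < k"

definition n_connected :: "'a matroid \<Rightarrow> nat \<Rightarrow> bool" where
  "n_connected M n \<longleftrightarrow> (\<forall>k X. 1 \<le> k \<and> k < n \<longrightarrow> \<not> k_separation M k X)"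

definition tangle :: "'a matroid \<Rightarrow> nat \<Rightarrow> 'a set set \<Rightarrow> bool" where
  "tangle M \<theta> \<T> \<longleftrightarrow>
     (\<forall>X\<in>\<T>. X \<subseteq> ground M)
     \<and> (\<forall>X\<in>\<T>. conn M X < \<theta>)
     \<and> (\<forall>X. X \<subseteq> ground M \<and> conn M X < \<theta> \<longrightarrow> X \<in> \<T> \<or> ground M - X \<in> \<T>)
     \<and> (\<forall>X\<in>\<T>. \<forall>Y\<in>\<T>. \<forall>Z\<in>\<T>. X \<union> Y \<union> Z \<noteq> ground M)
     \<and> (\<forall>e\<in>ground M. ground M - {e} \<notin> \<T>)"

definition tangle_rank :: "'a matroid \<Rightarrow> nat \<Rightarrow> 'a set set \<Rightarrow> 'a set \<Rightarrow> nat" where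
  "tangle_rank M \<theta> \<T> X =
     (if \<exists>Y\<in>\<T>. X \<subseteq> Y then Min {conn M Y | Y. Y \<in> \<T> \<and> X \<subseteq> Y} else \<theta>)"

definition tangle_matroid :: "'a matroid \<Rightarrow> nat \<Rightarrow> 'a set set \<Rightarrow> 'a matroid" where
  "tangle_matroid M \<theta> \<T> = (ground M, tangle_rank M \<theta> \<T>)"

definition inherited_tangle ::
    "'a matroid \<Rightarrow> 'a matroid \<Rightarrow> nat \<Rightarrow> 'a set set \<Rightarrow> 'a set set" where
  "inherited_tangle M N \<theta> \<T> =
     (let S = ground M - ground N in
      {X - S | X. X \<in> \<T> \<and> conn N (X - S) < \<theta> - card S})"

definition closed_set :: "'a matroid \<Rightarrow> 'a set \<Rightarrow> bool" where
  "closed_set M X \<longleftrightarrow> X \<subseteq> ground M \<and> (\<forall>e \<in> ground M - X. rk M (insert e X) \<noteq> rk M X)"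

definition long_line :: "'a matroid \<Rightarrow> 'a set \<Rightarrow> bool" where
  "long_line M X \<longleftrightarrow> closed_set M X \<and> rk M X = 2 \<and> card X \<ge> 3"

end

theory Submission imports Defs begin

lemma matroidD:
  assumes "matroid M"
  shows "finite (ground M)"
   and "X \<subseteq> ground M \<Longrightarrow> rk M X \<le> card X"
   and "X \<subseteq> Y \<Longrightarrow> Y \<subseteq> ground M \<Longrightarrow> rk M X \<le> rk M Y"
   and "X \<subseteq> ground M \<Longrightarrow> Y \<subseteq> ground M \<Longrightarrow> rk M (X \<union> Y) + rk M (X \<inter> Y) \<le> rk M X + rk M Y"
  using assms unfolding matroid_def by blast+

lemma rk_empty: "matroid M \<Longrightarrow> rk M {} = 0"
  using matroidD(2)[of M "{}"] by simp

lemma rk_single: "matroid M \<Longrightarrow> e \<in> ground M \<Longrightarrow> rk M {e} \<le> 1"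
  using matroidD(2)[of M "{e}"] by simp

lemma rk_add: assumes "matroid M" "A \<subseteq> ground M" "e \<in> ground M"
  shows "rk M (A \<union> {e}) \<le> rk M A + rk M {e}"
  using matroidD(4)[OF assms(1) assms(2), of "{e}"] assms by auto

lemma conn_int: assumes "matroid N" "S \<subseteq> ground N"
  shows "int (conn N S) = int (rk N S) + int (rk N (ground N - S)) - int (rk N (ground N))"
proof -
  have "rk N (S \<union> (ground N - S)) + rk N (S \<inter> (ground N - S)) \<le> rk N S + rk N (ground N - S)"
    using matroidD(4)[OF assms(1), of S "ground N - S"] assms(2) by auto
  moreover have "S \<union> (ground N - S) = ground N" using assms(2) by auto
  moreover have "S \<inter> (ground N - S) = {}" by auto
  ultimately have "rk N (ground N) \<le> rk N S + rk N (ground N - S)" using rk_empty[OF assms(1)] by simp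
  thus ?thesis unfolding conn_def by simp
qed

lemma conn_le_rk: assumes "matroid N" "S \<subseteq> ground N" shows "conn N S \<le> rk N S"
  using conn_int[OF assms] matroidD(3)[OF assms(1), of "ground N - S" "ground N"] by auto

lemma conn_compl: assumes "S \<subseteq> ground N" shows "conn N (ground N - S) = conn N S"
proof -
  have "ground N - (ground N - S) = S" using assms by auto
  thus ?thesis unfolding conn_def by simp
qed

lemma conn_submod: assumes "matroid N" "A \<subseteq> ground N" "B \<subseteq> ground N"
  shows "conn N (A \<union> B) + conn N (A \<inter> B) \<le> conn N A + conn N B"
proof -
  let ?G = "ground N"
  have 1: "rk N (A \<union> B) + rk N (A \<inter> B) \<le> rk N A + rk N B" using matroidD(4)[OF assms(1)] assms by auto
  have 2: "rk N ((?G-A) \<union> (?G-B)) + rk N ((?G-A) \<inter> (?G-B)) \<le> rk N (?G-A) + rk N (?G-B)"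
    using matroidD(4)[OF assms(1)] by auto
  have e1: "?G - (A \<union> B) = (?G-A) \<inter> (?G-B)" by auto
  have e2: "?G - (A \<inter> B) = (?G-A) \<union> (?G-B)" by auto
  have c1: "int (conn N (A \<union> B)) = int (rk N (A \<union> B)) + int (rk N ((?G-A) \<inter> (?G-B))) - int (rk N ?G)"
    using conn_int[OF assms(1), of "A \<union> B"] assms unfolding e1 by auto
  have c2: "int (conn N (A \<inter> B)) = int (rk N (A \<inter> B)) + int (rk N ((?G-A) \<union> (?G-B))) - int (rk N ?G)"
    using conn_int[OF assms(1), of "A \<inter> B"] assms unfolding e2 by auto
  have "int (conn N (A \<union> B)) + int (conn N (A \<inter> B)) \<le> int (conn N A) + int (conn N B)"
    using c1 c2 conn_int[OF assms(1), of A] conn_int[OF assms(1), of B] assms 1 2 by linarith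
  thus ?thesis by linarith
qed

lemma nconn: assumes "n_connected N 3" "S \<subseteq> ground N" "1 \<le> k" "k \<le> 2" "k \<le> card S" "k \<le> card (ground N - S)"
  shows "k \<le> conn N S"
proof (rule ccontr)
  assume "\<not> k \<le> conn N S"
  hence "k_separation N k S" using assms(2,5,6) unfolding k_separation_def by simp
  moreover have "k < 3" using assms(4) by simp
  ultimately show False using assms(1,3) unfolding n_connected_def by blast
qed

lemma minor_facts: assumes "matroid M" "e \<in> ground M" "M' = deletion M e \<or> M' = contraction M e"
  shows "matroid M'" "ground M' = ground M - {e}"
proof -
  show g: "ground M' = ground M - {e}" using assms(3) by (auto simp: deletion_def contraction_def ground_def)
  show "matroid M'"
  proof (cases "M' = deletion M e")
    case True
    have r: "rk M' = rk M" using True by (simp add: deletion_def rk_def)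
    have M: "finite (ground M)" "\<And>X. X \<subseteq> ground M \<Longrightarrow> rk M X \<le> card X"
     "\<And>X Y. X \<subseteq> Y \<Longrightarrow> Y \<subseteq> ground M \<Longrightarrow> rk M X \<le> rk M Y"
     "\<And>X Y. X \<subseteq> ground M \<Longrightarrow> Y \<subseteq> ground M \<Longrightarrow> rk M (X \<union> Y) + rk M (X \<inter> Y) \<le> rk M X + rk M Y"
      using matroidD[OF assms(1)] by auto
    show ?thesis unfolding matroid_def r g
      apply (intro conjI allI impI)
      using M(1) apply simp
      using M(2) apply blast
      apply (rule M(3)) apply blast apply blast
      apply (rule M(4)) apply blast apply blast
      done
  next
    case False
    hence r: "\<And>X. rk M' X = rk M (X \<union> {e}) - rk M {e}" using assms(3) by (simp add: contraction_def rk_def)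
    have fin: "finite (ground M')" using g matroidD(1)[OF assms(1)] by simp
    have R1: "rk M' X \<le> card X" if "X \<subseteq> ground M'" for X
    proof -
      have "X \<subseteq> ground M" using that g by auto
      hence "rk M (X \<union> {e}) \<le> rk M X + rk M {e}" using rk_add[OF assms(1) _ assms(2)] by auto
      moreover have "rk M X \<le> card X" using matroidD(2)[OF assms(1)] \<open>X \<subseteq> ground M\<close> by auto
      ultimately show ?thesis unfolding r by linarith
    qed
    have R2: "rk M' X \<le> rk M' Y" if "X \<subseteq> Y" "Y \<subseteq> ground M'" for X Y
    proof -
      have "X \<union> {e} \<subseteq> Y \<union> {e}" "Y \<union> {e} \<subseteq> ground M" using that g assms(2) by auto
      hence "rk M (X \<union> {e}) \<le> rk M (Y \<union> {e})" using matroidD(3)[OF assms(1)] by blast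
      thus ?thesis unfolding r by linarith
    qed
    have R3: "rk M' (X \<union> Y) + rk M' (X \<inter> Y) \<le> rk M' X + rk M' Y" if "X \<subseteq> ground M'" "Y \<subseteq> ground M'" for X Y
    proof -
      have s: "rk M ((X \<union> {e}) \<union> (Y \<union> {e})) + rk M ((X \<union> {e}) \<inter> (Y \<union> {e})) \<le> rk M (X \<union> {e}) + rk M (Y \<union> {e})"
        apply (rule matroidD(4)[OF assms(1)]) using that g assms(2) by auto
      have q1: "(X \<union> {e}) \<union> (Y \<union> {e}) = X \<union> Y \<union> {e}" by auto
      have q2: "(X \<union> {e}) \<inter> (Y \<union> {e}) = X \<inter> Y \<union> {e}" by auto
      have m: "rk M {e} \<le> rk M (Z \<union> {e})" if "Z \<subseteq> ground M'" for Z
        apply (rule matroidD(3)[OF assms(1)]) using that g assms(2) by auto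
      have "X \<inter> Y \<subseteq> ground M'" "X \<union> Y \<subseteq> ground M'" using that by auto
      then show ?thesis unfolding r using s[unfolded q1 q2] m[of "X \<inter> Y"] m[of "X \<union> Y"] m[of X] m[of Y] that by linarith
    qed
    show ?thesis unfolding matroid_def using fin R1 R2 R3 by blast
  qed
qed

lemma del_conn: assumes "matroid M" "e \<in> ground M" "Z \<subseteq> ground M - {e}"
  shows "int (conn (deletion M e) Z) = int (rk M Z) + int (rk M (ground M - {e} - Z)) - int (rk M (ground M - {e}))"
proof -
  have g: "ground (deletion M e) = ground M - {e}" and r: "rk (deletion M e) = rk M"
    by (simp_all add: deletion_def ground_def rk_def)
  show ?thesis using conn_int[OF minor_facts(1)[OF assms(1,2)], of "deletion M e" Z] assms(3) unfolding g r by simp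
qed

lemma con_conn: assumes "matroid M" "e \<in> ground M" "Z \<subseteq> ground M - {e}"
  shows "int (conn (contraction M e) Z) = int (rk M (Z \<union> {e})) + int (rk M (ground M - Z)) - int (rk M (ground M)) - int (rk M {e})"
proof -
  have g: "ground (contraction M e) = ground M - {e}" and r: "\<And>X. rk (contraction M e) X = rk M (X \<union> {e}) - rk M {e}"
    by (simp_all add: contraction_def ground_def rk_def)
  have m: "int (rk M (T \<union> {e}) - rk M {e}) = int (rk M (T \<union> {e})) - int (rk M {e})" if "T \<subseteq> ground M" for T
  proof -
    have "rk M {e} \<le> rk M (T \<union> {e})" apply (rule matroidD(3)[OF assms(1)]) using that assms(2) by auto
    thus ?thesis by simp
  qed
  have q1: "(ground M - {e} - Z) \<union> {e} = ground M - Z" using assms by auto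
  have q2: "(ground M - {e}) \<union> {e} = ground M" using assms by auto
  have "int (conn (contraction M e) Z) = int (rk (contraction M e) Z) + int (rk (contraction M e) (ground M - {e} - Z)) - int (rk (contraction M e) (ground M - {e}))"
    using conn_int[OF minor_facts(1)[OF assms(1,2)], of "contraction M e" Z] assms(3) unfolding g by simp
  also have "\<dots> = int (rk M (Z \<union> {e})) + int (rk M (ground M - Z)) - int (rk M (ground M)) - int (rk M {e})"
  proof -
    have s: "Z \<subseteq> ground M" "ground M - {e} - Z \<subseteq> ground M" "ground M - {e} \<subseteq> ground M" using assms(3) by auto
    show ?thesis unfolding r using m[OF s(1)] m[OF s(2)] m[OF s(3)] unfolding q1 q2 by linarith
  qed
  finally show ?thesis .
qed

lemma conn_ins: assumes "matroid M" "e \<in> ground M" "Z \<subseteq> ground M - {e}"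
  shows "int (conn M (Z \<union> {e})) = int (rk M (Z \<union> {e})) + int (rk M (ground M - {e} - Z)) - int (rk M (ground M))"
proof -
  have q: "ground M - (Z \<union> {e}) = ground M - {e} - Z" by auto
  show ?thesis using conn_int[OF assms(1), of "Z \<union> {e}"] assms unfolding q by auto
qed

lemma ineqs:
  assumes "matroid M" "e \<in> ground M" "M' = deletion M e \<or> M' = contraction M e" "Z \<subseteq> ground M - {e}"
  shows "conn M' Z \<le> conn M Z" and "conn M' Z \<le> conn M (Z \<union> {e})"
    and "conn M Z \<le> conn M' Z + 1" and "conn M (Z \<union> {e}) \<le> conn M' Z + 1"
proof -
  let ?G = "ground M" and ?r = "rk M"
  have sub: "\<And>X Y. X \<subseteq> ?G \<Longrightarrow> Y \<subseteq> ?G \<Longrightarrow> ?r (X \<union> Y) + ?r (X \<inter> Y) \<le> ?r X + ?r Y"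
    using matroidD(4)[OF assms(1)] by blast
  have mono: "\<And>X Y. X \<subseteq> Y \<Longrightarrow> Y \<subseteq> ?G \<Longrightarrow> ?r X \<le> ?r Y"
    using matroidD(3)[OF assms(1)] by blast
  have Z: "Z \<subseteq> ?G" "e \<notin> Z" using assms(4) by auto
  have F1: "?r (?G - {e} - Z) + ?r ?G \<le> ?r (?G - Z) + ?r (?G - {e})"
  proof -
    have "(?G - Z) \<union> (?G - {e}) = ?G" "(?G - Z) \<inter> (?G - {e}) = ?G - {e} - Z" using Z assms(2) by auto
    thus ?thesis using sub[of "?G - Z" "?G - {e}"] by auto
  qed
  have F2: "?r Z + ?r ?G \<le> ?r (Z \<union> {e}) + ?r (?G - {e})"
  proof -
    have "(Z \<union> {e}) \<union> (?G - {e}) = ?G" "(Z \<union> {e}) \<inter> (?G - {e}) = Z" using Z assms(2) by auto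
    moreover have "Z \<union> {e} \<subseteq> ?G" using Z assms(2) by auto
    ultimately show ?thesis using sub[of "Z \<union> {e}" "?G - {e}"] by auto
  qed
  have F3: "?r (?G - Z) \<le> ?r (?G - {e} - Z) + ?r {e}"
  proof -
    have "(?G - {e} - Z) \<union> {e} = ?G - Z" using Z assms(2) by auto
    thus ?thesis using rk_add[OF assms(1) _ assms(2), of "?G - {e} - Z"] by auto
  qed
  have F4: "?r (Z \<union> {e}) \<le> ?r Z + ?r {e}" using rk_add[OF assms(1) Z(1) assms(2)] .
  have F5: "?r {e} \<le> 1" using rk_single[OF assms(1,2)] .
  have F6: "?r (?G - {e}) \<le> ?r ?G" by (rule mono) auto
  have F7: "?r Z \<le> ?r (Z \<union> {e})" by (rule mono) (use Z assms(2) in auto)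
  have F8: "?r (?G - {e} - Z) \<le> ?r (?G - Z)" by (rule mono) auto
  have cZ: "int (conn M Z) = int (?r Z) + int (?r (?G - Z)) - int (?r ?G)" using conn_int[OF assms(1) Z(1)] .
  have cZe: "int (conn M (Z \<union> {e})) = int (?r (Z \<union> {e})) + int (?r (?G - {e} - Z)) - int (?r ?G)"
    using conn_ins[OF assms(1,2,4)] .
  have "int (conn M' Z) \<le> int (conn M Z) \<and> int (conn M' Z) \<le> int (conn M (Z \<union> {e}))
     \<and> int (conn M Z) \<le> int (conn M' Z) + 1 \<and> int (conn M (Z \<union> {e})) \<le> int (conn M' Z) + 1"
  proof (cases "M' = deletion M e")
    case True
    show ?thesis using del_conn[OF assms(1,2,4)] cZ cZe F1 F2 F3 F4 F5 F6 F7 F8 unfolding True by linarith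
  next
    case False
    hence "M' = contraction M e" using assms(3) by blast
    then show ?thesis using con_conn[OF assms(1,2,4)] cZ cZe F1 F2 F3 F4 F5 F6 F7 F8 by (simp; linarith)
  qed
  thus "conn M' Z \<le> conn M Z" "conn M' Z \<le> conn M (Z \<union> {e})"
    "conn M Z \<le> conn M' Z + 1" "conn M (Z \<union> {e}) \<le> conn M' Z + 1" by linarith+
qed

lemma ineq3:
  assumes "matroid M" "e \<in> ground M" "M' = deletion M e \<or> M' = contraction M e"
    "C \<subseteq> B" "B \<subseteq> ground M - {e}" "conn M (C \<union> {e}) \<le> conn M' C"
  shows "conn M (B \<union> {e}) \<le> conn M' B"
proof -
  let ?G = "ground M" and ?r = "rk M"
  have sub: "\<And>X Y. X \<subseteq> ?G \<Longrightarrow> Y \<subseteq> ?G \<Longrightarrow> ?r (X \<union> Y) + ?r (X \<inter> Y) \<le> ?r X + ?r Y"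
    using matroidD(4)[OF assms(1)] by blast
  have C: "C \<subseteq> ?G - {e}" using assms(4,5) by auto
  have S1: "?r (B \<union> {e}) + ?r C \<le> ?r (C \<union> {e}) + ?r B"
  proof -
    have "(C \<union> {e}) \<union> B = B \<union> {e}" "(C \<union> {e}) \<inter> B = C" "C \<union> {e} \<subseteq> ?G" "B \<subseteq> ?G" using assms(2,4,5) by auto
    thus ?thesis using sub[of "C \<union> {e}" B] by auto
  qed
  have S2: "?r (?G - C) + ?r (?G - {e} - B) \<le> ?r (?G - B) + ?r (?G - {e} - C)"
  proof -
    have "(?G - B) \<union> (?G - {e} - C) = ?G - C" "(?G - B) \<inter> (?G - {e} - C) = ?G - {e} - B" using assms(2,4,5) by auto
    thus ?thesis using sub[of "?G - B" "?G - {e} - C"] by auto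
  qed
  have h: "int (conn M (C \<union> {e})) \<le> int (conn M' C)" using assms(6) by simp
  have "int (conn M (B \<union> {e})) \<le> int (conn M' B)"
  proof (cases "M' = deletion M e")
    case True
    show ?thesis using h del_conn[OF assms(1,2) C] del_conn[OF assms(1,2,5)] conn_ins[OF assms(1,2) C] conn_ins[OF assms(1,2,5)] S1 S2 unfolding True by linarith
  next
    case False
    hence "M' = contraction M e" using assms(3) by blast
    then show ?thesis using h con_conn[OF assms(1,2) C] con_conn[OF assms(1,2,5)] conn_ins[OF assms(1,2) C] conn_ins[OF assms(1,2,5)] S1 S2 by (simp; linarith)
  qed
  thus ?thesis by linarith
qed

lemma tr_le_conn: assumes "\<forall>Y\<in>T. conn N Y < th" "Y \<in> T" "S \<subseteq> Y"
  shows "tangle_rank N th T S \<le> conn N Y"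
proof -
  have fin: "finite {conn N Y | Y. Y \<in> T \<and> S \<subseteq> Y}"
    by (rule finite_subset[of _ "{..<th}"]) (use assms(1) in auto)
  have "conn N Y \<in> {conn N Y | Y. Y \<in> T \<and> S \<subseteq> Y}" using assms by auto
  hence "Min {conn N Y | Y. Y \<in> T \<and> S \<subseteq> Y} \<le> conn N Y" using fin by (rule Min_le[rotated])
  thus ?thesis unfolding tangle_rank_def using assms by auto
qed

lemma tr_attain: assumes "\<forall>Y\<in>T. conn N Y < th" "tangle_rank N th T S < th"
  shows "\<exists>Y\<in>T. S \<subseteq> Y \<and> conn N Y = tangle_rank N th T S"
proof -
  have ex: "\<exists>Y\<in>T. S \<subseteq> Y"
  proof (rule ccontr)
    assume "\<not> (\<exists>Y\<in>T. S \<subseteq> Y)"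
    hence "tangle_rank N th T S = th" unfolding tangle_rank_def by simp
    thus False using assms(2) by simp
  qed
  have fin: "finite {conn N Y | Y. Y \<in> T \<and> S \<subseteq> Y}"
    by (rule finite_subset[of _ "{..<th}"]) (use assms(1) in auto)
  have ne: "{conn N Y | Y. Y \<in> T \<and> S \<subseteq> Y} \<noteq> {}" using ex by auto
  have "Min {conn N Y | Y. Y \<in> T \<and> S \<subseteq> Y} \<in> {conn N Y | Y. Y \<in> T \<and> S \<subseteq> Y}"
    using Min_in[OF fin ne] .
  then obtain Y where "Y \<in> T" "S \<subseteq> Y" "conn N Y = Min {conn N Y | Y. Y \<in> T \<and> S \<subseteq> Y}" by auto
  thus ?thesis unfolding tangle_rank_def using ex by auto
qed

lemma tr_le: assumes "\<forall>Y\<in>T. conn N Y < th" shows "tangle_rank N th T S \<le> th"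
proof (cases "\<exists>Y\<in>T. S \<subseteq> Y")
  case True
  then obtain Y where "Y \<in> T" "S \<subseteq> Y" by auto
  thus ?thesis using tr_le_conn[OF assms, of Y S] assms by fastforce
next
  case False thus ?thesis unfolding tangle_rank_def by auto
qed

lemma tr_mono: assumes "\<forall>Y\<in>T. conn N Y < th" "S \<subseteq> S'"
  shows "tangle_rank N th T S \<le> tangle_rank N th T S'"
proof (cases "tangle_rank N th T S' < th")
  case True
  then obtain Y where "Y \<in> T" "S' \<subseteq> Y" "conn N Y = tangle_rank N th T S'" using tr_attain[OF assms(1)] by blast
  thus ?thesis using tr_le_conn[OF assms(1), of Y S] assms(2) by auto
next
  case False thus ?thesis using tr_le[OF assms(1), of S] by auto
qed

lemma tangleD: assumes "tangle M th T"
  shows "\<And>Y. Y \<in> T \<Longrightarrow> Y \<subseteq> ground M" "\<forall>Y\<in>T. conn M Y < th"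
   "\<And>S. S \<subseteq> ground M \<Longrightarrow> conn M S < th \<Longrightarrow> S \<in> T \<or> ground M - S \<in> T"
   "\<And>A B C. A \<in> T \<Longrightarrow> B \<in> T \<Longrightarrow> C \<in> T \<Longrightarrow> A \<union> B \<union> C \<noteq> ground M"
   "\<And>a. a \<in> ground M \<Longrightarrow> ground M - {a} \<notin> T"
proof -
  note A = assms[unfolded tangle_def]
  show "\<And>Y. Y \<in> T \<Longrightarrow> Y \<subseteq> ground M" using A[THEN conjunct1] by (rule bspec)
  show "\<forall>Y\<in>T. conn M Y < th" using A[THEN conjunct2, THEN conjunct1] .
  show "\<And>S. S \<subseteq> ground M \<Longrightarrow> conn M S < th \<Longrightarrow> S \<in> T \<or> ground M - S \<in> T"
    using A[THEN conjunct2, THEN conjunct2, THEN conjunct1] by simp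
  show "\<And>A B C. A \<in> T \<Longrightarrow> B \<in> T \<Longrightarrow> C \<in> T \<Longrightarrow> A \<union> B \<union> C \<noteq> ground M"
    using A[THEN conjunct2, THEN conjunct2, THEN conjunct2, THEN conjunct1] by simp
  show "\<And>a. a \<in> ground M \<Longrightarrow> ground M - {a} \<notin> T"
    using A[THEN conjunct2, THEN conjunct2, THEN conjunct2, THEN conjunct2] by simp
qed

lemma tangle_single: assumes "matroid M" "tangle M th T" "1 < th" "a \<in> ground M" shows "{a} \<in> T"
proof -
  have "conn M {a} \<le> 1" using conn_le_rk[OF assms(1), of "{a}"] rk_single[OF assms(1,4)] assms(4) by auto
  thus ?thesis using tangleD(3)[OF assms(2), of "{a}"] tangleD(5)[OF assms(2) assms(4)] assms by auto
qed

lemma tangle_compl2: assumes "matroid M" "tangle M th T" "1 < th" "Y \<in> T" shows "2 \<le> card (ground M - Y)"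
proof (rule ccontr)
  assume "\<not> 2 \<le> card (ground M - Y)"
  hence c: "card (ground M - Y) \<le> 1" by simp
  have fin: "finite (ground M - Y)" using matroidD(1)[OF assms(1)] by simp
  have Ys: "Y \<subseteq> ground M" using tangleD(1)[OF assms(2) assms(4)] .
  show False
  proof (cases "ground M - Y = {}")
    case True
    hence "Y \<union> Y \<union> Y = ground M" using Ys by auto
    thus False using tangleD(4)[OF assms(2) assms(4) assms(4) assms(4)] by simp
  next
    case False
    have "card (ground M - Y) \<noteq> 0" using False fin by simp
    hence "card (ground M - Y) = 1" using c by linarith
    then obtain a where a: "ground M - Y = {a}" by (rule card_1_singletonE)
    hence u: "Y \<union> {a} \<union> {a} = ground M" using Ys by auto
    have "{a} \<in> T" using tangle_single[OF assms(1-3)] a by auto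
    thus False using tangleD(4)[OF assms(2) assms(4), of "{a}" "{a}"] u by simp
  qed
qed

lemma tangle_union: assumes "matroid M" "tangle M th T" "A \<in> T" "B \<in> T" "conn M (A \<union> B) < th"
  shows "A \<union> B \<in> T"
proof (rule ccontr)
  assume n: "A \<union> B \<notin> T"
  have "A \<union> B \<subseteq> ground M" using tangleD(1)[OF assms(2)] assms(3,4) by auto
  hence "ground M - (A \<union> B) \<in> T" using tangleD(3)[OF assms(2)] assms(5) n by blast
  moreover have "A \<union> B \<union> (ground M - (A \<union> B)) = ground M" using \<open>A \<union> B \<subseteq> ground M\<close> by auto
  ultimately show False using tangleD(4)[OF assms(2) assms(3,4)] by blast
qed

lemma tm_simps: "ground (tangle_matroid M th T) = ground M" "rk (tangle_matroid M th T) = tangle_rank M th T"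
  by (simp_all add: tangle_matroid_def ground_def rk_def)

lemma ineq1: assumes "matroid M" "e \<in> ground M" "M' = deletion M e \<or> M' = contraction M e" "S \<subseteq> ground M"
  shows "conn M' (S - {e}) \<le> conn M S"
proof -
  have s: "S - {e} \<subseteq> ground M - {e}" using assms(4) by auto
  show ?thesis
  proof (cases "e \<in> S")
    case True
    have q: "(S - {e}) \<union> {e} = S" using True by auto
    show ?thesis using ineqs(2)[OF assms(1-3) s] unfolding q .
  next
    case False
    hence q: "S - {e} = S" by auto
    show ?thesis using ineqs(1)[OF assms(1-3) s] unfolding q .
  qed
qed

theorem lemma2p34:
  fixes M M' :: "'a matroid" and \<theta> :: nat and \<T> :: "'a set set"
    and X X' :: "'a set" and e :: 'a
  assumes "matroid M" and "n_connected M 3"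
    and "tangle M \<theta> \<T>"
    and "long_line (tangle_matroid M \<theta> \<T>) X"
    and "long_line (tangle_matroid M \<theta> \<T>) X'"
    and "tangle_rank M \<theta> \<T> (X \<union> X') = 4"
    and "e \<in> X"
    and "M' = deletion M e \<or> M' = contraction M e"
    and "n_connected M' 3"
  shows "closed_set (tangle_matroid M' (\<theta> - 1) (inherited_tangle M M' \<theta> \<T>)) X'"
proof -
  note M = assms(1)
  let ?E = "ground M"
  let ?rT = "tangle_rank M \<theta> \<T>"
  have Tb: "\<forall>Y\<in>\<T>. conn M Y < \<theta>" using tangleD(2)[OF assms(3)] .
  from assms(4) have X: "X \<subseteq> ?E" "?rT X = 2" "3 \<le> card X"
    unfolding long_line_def closed_set_def tm_simps by auto
  from assms(5) have X': "X' \<subseteq> ?E" "?rT X' = 2" "3 \<le> card X'" "\<forall>g\<in>?E - X'. ?rT (insert g X') \<noteq> ?rT X'"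
    unfolding long_line_def closed_set_def tm_simps by auto
  have th4: "4 \<le> \<theta>" using tr_le[OF Tb, of "X \<union> X'"] assms(6) by simp
  have th1: "1 < \<theta>" using th4 by simp
  obtain W where W: "W \<in> \<T>" "X \<subseteq> W" "conn M W = 2" using tr_attain[OF Tb, of X] X(2) th4 by auto
  obtain W' where W': "W' \<in> \<T>" "X' \<subseteq> W'" "conn M W' = 2" using tr_attain[OF Tb, of X'] X'(2) th4 by auto
  have eE: "e \<in> ?E" using assms(7) X(1) by auto
  have WE: "W \<subseteq> ?E" "W' \<subseteq> ?E" using tangleD(1)[OF assms(3)] W(1) W'(1) by auto
  have finE: "finite ?E" using matroidD(1)[OF M] .
  have cW: "2 \<le> card (?E - W)" using tangle_compl2[OF M assms(3) th1 W(1)] .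
  have noX: "\<not> (\<exists>V\<in>\<T>. X \<union> X' \<subseteq> V \<and> conn M V \<le> 3)"
  proof
    assume "\<exists>V\<in>\<T>. X \<union> X' \<subseteq> V \<and> conn M V \<le> 3"
    then obtain V where "V \<in> \<T>" "X \<union> X' \<subseteq> V" "conn M V \<le> 3" by blast
    thus False using tr_le_conn[OF Tb, of V "X \<union> X'"] assms(6) by simp
  qed
  have eX': "e \<notin> X'"
  proof
    assume "e \<in> X'"
    have i: "e \<in> W \<inter> W'" using \<open>e \<in> X'\<close> assms(7) W(2) W'(2) by auto
    have "1 \<le> conn M (W \<inter> W')"
    proof (rule nconn[OF assms(2)])
      show "W \<inter> W' \<subseteq> ?E" using WE by auto
      have "finite (W \<inter> W')" using finite_subset[OF _ finE, of "W \<inter> W'"] WE by auto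
      hence "card (W \<inter> W') > 0" using i card_gt_0_iff by blast
      thus "1 \<le> card (W \<inter> W')" by simp
      have "card (?E - W) \<le> card (?E - W \<inter> W')" by (rule card_mono) (use finE in auto)
      thus "1 \<le> card (?E - W \<inter> W')" using cW by linarith
    qed simp_all
    then have c3: "conn M (W \<union> W') \<le> 3" using conn_submod[OF M WE] W(3) W'(3) by linarith
    hence "W \<union> W' \<in> \<T>" using tangle_union[OF M assms(3) W(1) W'(1)] th4 by linarith
    thus False using noX c3 W(2) W'(2) by blast
  qed
  have mf: "matroid M'" "ground M' = ?E - {e}" using minor_facts[OF M eE assms(8)] by auto
  define T' where "T' = inherited_tangle M M' \<theta> \<T>"
  have T'eq: "T' = {Y - {e} | Y. Y \<in> \<T> \<and> conn M' (Y - {e}) < \<theta> - 1}"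
  proof -
    have "?E - ground M' = {e}" using mf eE by auto
    thus ?thesis unfolding T'_def inherited_tangle_def Let_def by simp
  qed
  have T'b: "\<forall>Y\<in>T'. conn M' Y < \<theta> - 1" unfolding T'eq by auto
  let ?rT' = "tangle_rank M' (\<theta>-1) T'"
  show ?thesis unfolding T'_def[symmetric] closed_set_def tm_simps mf(2)
  proof (intro conjI ballI)
    show "X' \<subseteq> ?E - {e}" using X'(1) eX' by auto
    fix f assume f: "f \<in> ?E - {e} - X'"
    show "?rT' (insert f X') \<noteq> ?rT' X'"
    proof
      assume eq: "?rT' (insert f X') = ?rT' X'"
      have "conn M' (W' - {e}) \<le> conn M W'" using ineq1[OF M eE assms(8) WE(2)] .
      hence "conn M' (W' - {e}) < \<theta> - 1" using W'(3) th4 by linarith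
      hence W'T: "W' - {e} \<in> T'" unfolding T'eq using W'(1) by blast
      have "X' \<subseteq> W' - {e}" using W'(2) eX' by auto
      hence "?rT' X' \<le> conn M' (W' - {e})" by (rule tr_le_conn[OF T'b W'T])
      hence r1: "?rT' X' \<le> 2" using \<open>conn M' (W' - {e}) \<le> conn M W'\<close> W'(3) by linarith
      then have "?rT' (insert f X') < \<theta> - 1" using eq th4 by linarith
      then obtain Y' where Y': "Y' \<in> T'" "insert f X' \<subseteq> Y'" "conn M' Y' = ?rT' (insert f X')"
        using tr_attain[OF T'b] by blast
      from Y'(1) obtain Y where Y: "Y \<in> \<T>" "Y' = Y - {e}" unfolding T'eq by auto
      define Z where "Z = Y - {e}"
      have YE: "Y \<subseteq> ?E" using tangleD(1)[OF assms(3) Y(1)] .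
      have ZE: "Z \<subseteq> ?E - {e}" using YE Z_def by auto
      have cZ': "conn M' Z \<le> 2" using Y'(3) Y(2) Z_def eq r1 by simp
      have fX'Z: "insert f X' \<subseteq> Z" using Y'(2) Y(2) Z_def by simp
      have c1: "conn M Z \<le> 3" "conn M (Z \<union> {e}) \<le> 3"
        using ineqs(3,4)[OF M eE assms(8) ZE] cZ' by linarith+
      have sing: "{e} \<in> \<T>" using tangle_single[OF M assms(3) th1 eE] .
      have ZT: "Z \<in> \<T>"
      proof (rule ccontr)
        assume "Z \<notin> \<T>"
        hence "?E - Z \<in> \<T>" using tangleD(3)[OF assms(3), of Z] ZE c1(1) th4 by auto
        moreover have "Y \<union> (?E - Z) \<union> (?E - Z) = ?E" using YE Z_def by auto
        ultimately show False using tangleD(4)[OF assms(3) Y(1)] by blast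
      qed
      have ZeT: "Z \<union> {e} \<in> \<T>"
      proof (rule ccontr)
        assume "Z \<union> {e} \<notin> \<T>"
        moreover have "Z \<union> {e} \<subseteq> ?E" using ZE eE by auto
        ultimately have "?E - (Z \<union> {e}) \<in> \<T>" using tangleD(3)[OF assms(3), of "Z \<union> {e}"] c1(2) th4 by auto
        moreover have "Z \<union> {e} \<union> (?E - (Z \<union> {e})) = ?E" using ZE eE by auto
        ultimately show False using tangleD(4)[OF assms(3) ZT sing] by blast
      qed
      have r3: "3 \<le> ?rT (insert f X')"
      proof -
        have "?rT X' \<le> ?rT (insert f X')" by (rule tr_mono[OF Tb]) auto
        moreover have "?rT (insert f X') \<noteq> ?rT X'" using X'(4) f by auto
        ultimately show ?thesis using X'(2) by linarith
      qed
      have cZ3: "3 \<le> conn M Z" using tr_le_conn[OF Tb ZT fX'Z] r3 by linarith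
      have disj: "Z \<inter> W = {}"
      proof (rule ccontr)
        assume "Z \<inter> W \<noteq> {}"
        then obtain g where g: "g \<in> Z" "g \<in> W" by auto
        let ?P = "(Z \<union> {e}) \<inter> W"
        have PE: "?P \<subseteq> ?E" using WE by auto
        have ge: "g \<noteq> e" using g ZE by auto
        have "{g, e} \<subseteq> ?P" using g assms(7) W(2) by auto
        hence "card {g,e} \<le> card ?P" using card_mono finite_subset[OF PE finE] by blast
        hence cP: "2 \<le> card ?P" using ge by simp
        have "card (?E - W) \<le> card (?E - ?P)" by (rule card_mono) (use finE in auto)
        hence cP2: "2 \<le> card (?E - ?P)" using cW by linarith
        have "2 \<le> conn M ?P" by (rule nconn[OF assms(2) PE]) (use cP cP2 in auto)
        moreover have "conn M ((Z \<union> {e}) \<union> W) + conn M ?P \<le> conn M (Z \<union> {e}) + conn M W"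
          by (rule conn_submod[OF M]) (use ZE eE WE in auto)
        ultimately have cU: "conn M ((Z \<union> {e}) \<union> W) \<le> 3" using c1(2) W(3) by linarith
        hence "(Z \<union> {e}) \<union> W \<in> \<T>" using tangle_union[OF M assms(3) ZeT W(1)] th4 by linarith
        moreover have "X \<union> X' \<subseteq> (Z \<union> {e}) \<union> W" using W(2) fX'Z by auto
        ultimately show False using noX cU by blast
      qed
      have C: "W - {e} \<subseteq> ?E - {e} - Z" using WE disj by auto
      have BE: "?E - {e} - Z \<subseteq> ?E - {e}" by auto
      have eW: "e \<in> W" using W(2) assms(7) by auto
      have cWe: "2 \<le> conn M' (W - {e})"
      proof (rule nconn[OF assms(9)])
        show "W - {e} \<subseteq> ground M'" using mf WE by auto
        have "card X \<le> card W" using card_mono finite_subset[OF WE(1) finE] W(2) by blast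
        hence "3 \<le> card W" using X(3) by linarith
        thus "2 \<le> card (W - {e})" using eW by (simp add: card_Diff_singleton)
        have "ground M' - (W - {e}) = ?E - W" using mf eW by auto
        thus "2 \<le> card (ground M' - (W - {e}))" using cW by simp
      qed simp_all
      have h3: "conn M ((W - {e}) \<union> {e}) \<le> conn M' (W - {e})"
      proof -
        have "(W - {e}) \<union> {e} = W" using eW by auto
        thus ?thesis using W(3) cWe by simp
      qed
      have "conn M ((?E - {e} - Z) \<union> {e}) \<le> conn M' (?E - {e} - Z)" by (rule ineq3[OF M eE assms(8) C BE h3])
      moreover have "(?E - {e} - Z) \<union> {e} = ?E - Z" using ZE eE by auto
      moreover have "conn M (?E - Z) = conn M Z" by (rule conn_compl) (use ZE in auto)
      moreover have "conn M' (?E - {e} - Z) = conn M' Z" using conn_compl[of Z M'] ZE mf(2) by simp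
      ultimately have "conn M Z \<le> conn M' Z" by simp
      thus False using cZ' cZ3 by linarith
    qed
  qed
qed

end
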